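(* Consider $\min f(x)$ s.t. $g(x)\in K$ with $f,g$ twice continuously differentiable, $K\subseteq\mathbb{R}^m$ closed, $C:=g^{-1}(K)$. Let $\bar x\in C$, $d\in T_C(\bar x)\setminus\{0\}$ with $\nabla f(\bar x)d=0$, and suppose there is $\lambda\in\mathbb{R}^m$ with $\nabla_xL(\bar x,\lambda)=0$ such that (i) $\langle\lambda,v\rangle<0$ for all $v\in T_K^{''}(g(\bar x);\nabla g(\bar x)d)\cap\nabla g(\bar x)(\{d\}^\perp\setminus\{0\})$; (ii) $\nabla^2_{xx}L(\bar x,\lambda)(d,d)-\sigma_{T_K^2(g(\bar x);\nabla g(\bar x)d)}(\lambda)>0$. Then there exist $\kappa,\rho,\delta>0$ with $f(x)\ge f(\bar x)+\kappa\|x-\bar x\|^2$ for all $x\in C\cap(\bar x+V_{\rho,\delta}(d))$. Moreover, if $\nabla f(\bar x)d\ge0$ for all $d\in T_C(\bar x)$ and for every $d\in C(\bar x)\setminus\{0\}$ there is $\lambda$ with $\nabla_xL(\bar x,\lambda)=0$ satisfying (i) and (ii), then there exist $\kappa,\delta>0$ with $f(x)\ge f(\bar x)+\kappa\|x-\bar x\|^2$ for all $x\in C$ with $\|x-\bar x\|\le\delta$.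
   Context: $L(x,\lambda):=f(x)+\langle\lambda,g(x)\rangle$; $\nabla g(\bar x)(\{d\}^\perp\setminus\{0\})$ is the image under $\nabla g(\bar x)$ of nonzero vectors orthogonal to $d$. Critical cone $C(\bar x):=\{d\mid\nabla g(\bar x)d\in T_K(g(\bar x)),\ \nabla f(\bar x)d\le0\}$. $T_K^2(\bar y;v):=\{w\mid \exists t_k\downarrow0,w_k\to w,\ \bar y+t_kv+\tfrac12t_k^2w_k\in K\}$; $T_K^{''}(\bar y;v):=\{w\mid \exists(t_k,r_k)\downarrow(0,0),w_k\to w,\ t_k/r_k\to0,\ \bar y+t_kv+\tfrac12t_kr_kw_k\in K\}$. $\sigma_S(\lambda):=\sup_{u\in S}\langle\lambda,u\rangle$, $\sigma_\emptyset\equiv-\infty$. $V_{\rho,\delta}(d):=\{w\in\delta B_{\mathbb{R}^n}\mid\|\,\|d\|w-\|w\|d\,\|\le\rho\|w\|\|d\|\}$. *)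

theory Defs
  imports "HOL-Analysis.Analysis"
begin

definition tangent_cone :: "'a::real_normed_vector set \<Rightarrow> 'a \<Rightarrow> 'a set" where
  "tangent_cone S x = {d. \<exists>t dd. (\<forall>k. t k > (0::real)) \<and> t \<longlonglongrightarrow> 0 \<and> dd \<longlonglongrightarrow> d
        \<and> (\<forall>k. x + t k *\<^sub>R dd k \<in> S)}"

definition second_tangent_set :: "'a::real_normed_vector set \<Rightarrow> 'a \<Rightarrow> 'a \<Rightarrow> 'a set" where
  "second_tangent_set K y v = {w. \<exists>t ww. (\<forall>k. t k > (0::real)) \<and> t \<longlonglongrightarrow> 0 \<and> ww \<longlonglongrightarrow> w
        \<and> (\<forall>k. y + t k *\<^sub>R v + ((1/2) * (t k)\<^sup>2) *\<^sub>R ww k \<in> K)}"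

definition asymp_second_tangent_cone :: "'a::real_normed_vector set \<Rightarrow> 'a \<Rightarrow> 'a \<Rightarrow> 'a set" where
  "asymp_second_tangent_cone K y v = {w. \<exists>t r ww. (\<forall>k. t k > (0::real)) \<and> (\<forall>k. r k > (0::real))
        \<and> t \<longlonglongrightarrow> 0 \<and> r \<longlonglongrightarrow> 0 \<and> (\<lambda>k. t k / r k) \<longlonglongrightarrow> 0 \<and> ww \<longlonglongrightarrow> w
        \<and> (\<forall>k. y + t k *\<^sub>R v + ((1/2) * t k * r k) *\<^sub>R ww k \<in> K)}"

text \<open>Support function, with values in the extended reals; sigma of the empty set is -infinity.\<close>
definition support_fun :: "'a::real_inner set \<Rightarrow> 'a \<Rightarrow> ereal" where
  "support_fun S l = (SUP u\<in>S. ereal (l \<bullet> u))"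

definition V_set :: "real \<Rightarrow> real \<Rightarrow> 'a::real_normed_vector \<Rightarrow> 'a set" where
  "V_set \<rho> \<delta> d = {w \<in> cball 0 \<delta>. norm (norm d *\<^sub>R w - norm w *\<^sub>R d) \<le> \<rho> * norm w * norm d}"

definition soc_multiplier ::
  "('a::euclidean_space \<Rightarrow>\<^sub>L real) \<Rightarrow> ('a \<Rightarrow>\<^sub>L 'a \<Rightarrow>\<^sub>L real) \<Rightarrow>
   ('a \<Rightarrow>\<^sub>L 'b::euclidean_space) \<Rightarrow> ('a \<Rightarrow>\<^sub>L 'a \<Rightarrow>\<^sub>L 'b) \<Rightarrow> 'b set \<Rightarrow> 'b \<Rightarrow> 'a \<Rightarrow> 'b \<Rightarrow> bool" where
  "soc_multiplier Df D2f Dg D2g K y d l \<longleftrightarrow>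
     (\<forall>u. blinfun_apply Df u + l \<bullet> blinfun_apply Dg u = 0)
   \<and> (\<forall>v \<in> asymp_second_tangent_cone K y (blinfun_apply Dg d)
             \<inter> blinfun_apply Dg ` ({u. u \<bullet> d = 0} - {0}). l \<bullet> v < 0)
   \<and> ereal (blinfun_apply (blinfun_apply D2f d) d + l \<bullet> blinfun_apply (blinfun_apply D2g d) d)
       - support_fun (second_tangent_set K y (blinfun_apply Dg d)) l > 0"

end

theory Submission
  imports Defs
begin


lemma taylor_line:
  fixes g :: "'a::real_normed_vector \<Rightarrow> 'b::real_inner"
  assumes g1: "\<And>x. (g has_derivative blinfun_apply (g' x)) (at x)"
    and g2: "\<And>x. (g' has_derivative blinfun_apply (g'' x)) (at x)"
  shows "\<exists>s. 0 < s \<and> s < 1 \<and> (g (x + h) - g x - g' x h - (1/2) *\<^sub>R g'' x h h) \<bullet> b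
           = (1/2) * ((g'' (x + s *\<^sub>R h) h h - g'' x h h) \<bullet> b)"
proof -
  define p0 where "p0 = (\<lambda>s::real. g (x + s *\<^sub>R h) \<bullet> b)"
  define p1 where "p1 = (\<lambda>s::real. g' (x + s *\<^sub>R h) h \<bullet> b)"
  define p2 where "p2 = (\<lambda>s::real. g'' (x + s *\<^sub>R h) h h \<bullet> b)"
  have lin: "((\<lambda>s. x + s *\<^sub>R h) has_derivative (\<lambda>s. s *\<^sub>R h)) (at s)" for s
    by (auto intro!: derivative_eq_intros)
  have d0: "DERIV p0 s :> p1 s" for s
  proof -
    have "((\<lambda>s. g (x + s *\<^sub>R h)) has_derivative (\<lambda>s'. g' (x + s *\<^sub>R h) (s' *\<^sub>R h))) (at s)"
      using has_derivative_compose[OF lin g1] by (simp add: o_def)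
    from has_derivative_inner_left[OF this, of b]
    have "(p0 has_derivative (\<lambda>s'. s' * p1 s)) (at s)"
      unfolding p0_def p1_def by (simp add: blinfun.scaleR_right)
    then show ?thesis by (simp add: has_field_derivative_def mult.commute[of _ "p1 s"] mult.commute[of _ "p2 s"])
  qed
  have d1: "DERIV p1 s :> p2 s" for s
  proof -
    have a: "((\<lambda>y. g' y h) has_derivative (\<lambda>v. g'' (x + s *\<^sub>R h) v h)) (at (x + s *\<^sub>R h))"
      using bounded_bilinear.FDERIV[OF bounded_bilinear_blinfun_apply g2 has_derivative_const[of h]]
      by simp
    have "((\<lambda>s. g' (x + s *\<^sub>R h) h) has_derivative (\<lambda>s'. g'' (x + s *\<^sub>R h) (s' *\<^sub>R h) h)) (at s)"
      using has_derivative_compose[OF lin a] by (simp add: o_def)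
    from has_derivative_inner_left[OF this, of b]
    have "(p1 has_derivative (\<lambda>s'. s' * p2 s)) (at s)"
      unfolding p1_def p2_def by (simp add: blinfun.scaleR_right blinfun.scaleR_left)
    then show ?thesis by (simp add: has_field_derivative_def mult.commute[of _ "p1 s"] mult.commute[of _ "p2 s"])
  qed
  define diff where "diff = (\<lambda>m::nat. if m = 0 then p0 else if m = 1 then p1 else p2)"
  have "\<exists>t. 0 < t \<and> t < 1 \<and> p0 1 = (\<Sum>m<2. (diff m 0 / fact m) * (1 - 0)^m) + (diff 2 t / fact 2) * (1 - 0)^2"
    using Taylor[of 2 diff p0 0 1 0 1] d0 d1 unfolding diff_def
    by (auto simp: less_2_cases_iff)
  then obtain t where t: "0 < t" "t < 1" "p0 1 = p0 0 + p1 0 + p2 t / 2"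
    unfolding diff_def by (auto simp: numeral_2_eq_2)
  show ?thesis
    apply (rule exI[of _ t])
    using t unfolding p0_def p1_def p2_def
    by (simp add: inner_diff_left algebra_simps)
qed


lemma taylor_rem:
  fixes g :: "'a::real_normed_vector \<Rightarrow> 'b::real_inner"
  assumes g1: "\<And>x. (g has_derivative blinfun_apply (g' x)) (at x)"
    and g2: "\<And>x. (g' has_derivative blinfun_apply (g'' x)) (at x)"
    and gc: "isCont g'' x" and e: "e > 0"
  shows "\<exists>\<delta>>0. \<forall>h. norm h < \<delta> \<longrightarrow> norm (g (x + h) - g x - g' x h - (1/2) *\<^sub>R g'' x h h) \<le> e * (norm h)\<^sup>2"
proof -
  obtain \<delta> where dp: "\<delta> > 0" and dd: "\<And>y. dist y x < \<delta> \<Longrightarrow> dist (g'' y) (g'' x) < 2 * e"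
  proof -
    have "2 * e > 0" using e by simp
    then obtain d where "d > 0" "\<forall>y\<in>UNIV. y \<noteq> x \<and> dist y x < d \<longrightarrow> dist (g'' y) (g'' x) < 2 * e"
      using gc unfolding isCont_def LIM_def by blast
    moreover have "\<And>y. dist y x < d \<Longrightarrow> dist (g'' y) (g'' x) < 2 * e"
    proof -
      fix y assume "dist y x < d"
      then show "dist (g'' y) (g'' x) < 2 * e" using \<open>2 * e > 0\<close> calculation(2) by (cases "y = x") auto
    qed
    ultimately show ?thesis using that by blast
  qed
  show ?thesis
  proof (intro exI[of _ \<delta>] conjI allI impI dp)
    fix h :: 'a assume hn: "norm h < \<delta>"
    define R where "R = g (x + h) - g x - g' x h - (1/2) *\<^sub>R g'' x h h"
    obtain s where s: "0 < s" "s < 1" "R \<bullet> R = (1/2) * ((g'' (x + s *\<^sub>R h) h h - g'' x h h) \<bullet> R)"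
      using taylor_line[OF g1 g2, of x h R] unfolding R_def by blast
    have "norm (s *\<^sub>R h) < \<delta>" using s hn mult_left_le_one_le[of "norm h" s] by simp
    then have dl: "norm (g'' (x + s *\<^sub>R h) - g'' x) \<le> 2 * e"
      using dd[of "x + s *\<^sub>R h"] by (simp add: dist_norm)
    have "norm (g'' (x + s *\<^sub>R h) h h - g'' x h h) = norm ((g'' (x + s *\<^sub>R h) - g'' x) h h)"
      by (simp add: blinfun.diff_left)
    also have "\<dots> \<le> norm ((g'' (x + s *\<^sub>R h) - g'' x) h) * norm h" by (rule norm_blinfun)
    also have "\<dots> \<le> (norm (g'' (x + s *\<^sub>R h) - g'' x) * norm h) * norm h"
      by (intro mult_right_mono norm_blinfun) auto
    also have "\<dots> \<le> (2 * e * norm h) * norm h"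
      by (intro mult_right_mono dl) auto
    finally have nb: "norm (g'' (x + s *\<^sub>R h) h h - g'' x h h) \<le> 2 * e * (norm h)\<^sup>2"
      by (simp add: power2_eq_square mult.assoc)
    have "(norm R)\<^sup>2 = (1/2) * ((g'' (x + s *\<^sub>R h) h h - g'' x h h) \<bullet> R)"
      using s(3) by (simp add: power2_norm_eq_inner)
    also have "\<dots> \<le> (1/2) * (norm (g'' (x + s *\<^sub>R h) h h - g'' x h h) * norm R)"
      by (intro mult_left_mono) (auto intro: order_trans[OF _ Cauchy_Schwarz_ineq2] simp: abs_le_iff)
    also have "\<dots> \<le> (1/2) * ((2 * e * (norm h)\<^sup>2) * norm R)"
      by (intro mult_left_mono mult_right_mono nb) auto
    finally have "norm R * norm R \<le> (e * (norm h)\<^sup>2) * norm R"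
      by (simp add: power2_eq_square)
    then show "norm R \<le> e * (norm h)\<^sup>2"
      by (cases "norm R = 0") (use e in \<open>auto simp: mult_le_cancel_right\<close>)
  qed
qed

lemma taylor_seq:
  fixes g :: "'a::real_normed_vector \<Rightarrow> 'b::real_inner"
  assumes g1: "\<And>x. (g has_derivative blinfun_apply (g' x)) (at x)"
    and g2: "\<And>x. (g' has_derivative blinfun_apply (g'' x)) (at x)"
    and gc: "isCont g'' x" and h0: "h \<longlonglongrightarrow> 0" and hn: "\<And>k. h k \<noteq> 0"
  shows "(\<lambda>k. (1 / (norm (h k))\<^sup>2) *\<^sub>R (g (x + h k) - g x - g' x (h k) - (1/2) *\<^sub>R g'' x (h k) (h k))) \<longlonglongrightarrow> 0"
proof (rule LIMSEQ_I)
  fix e :: real assume e: "e > 0"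
  obtain \<delta> where dp: "\<delta> > 0" and dd: "\<And>h. norm h < \<delta> \<Longrightarrow> norm (g (x + h) - g x - g' x h - (1/2) *\<^sub>R g'' x h h) \<le> (e/2) * (norm h)\<^sup>2"
    using taylor_rem[OF g1 g2 gc, of "e/2"] e by auto
  obtain N where N: "\<And>k. k \<ge> N \<Longrightarrow> norm (h k) < \<delta>"
    using LIMSEQ_D[OF h0 dp] by auto
  show "\<exists>N. \<forall>k\<ge>N. norm ((1 / (norm (h k))\<^sup>2) *\<^sub>R (g (x + h k) - g x - g' x (h k) - (1/2) *\<^sub>R g'' x (h k) (h k)) - 0) < e"
  proof (intro exI allI impI)
    fix k assume "k \<ge> N"
    then have a: "norm (g (x + h k) - g x - g' x (h k) - (1/2) *\<^sub>R g'' x (h k) (h k)) \<le> (e/2) * (norm (h k))\<^sup>2"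
      using dd N by auto
    have p: "(norm (h k))\<^sup>2 > 0" using hn[of k] by simp
    show "norm ((1 / (norm (h k))\<^sup>2) *\<^sub>R (g (x + h k) - g x - g' x (h k) - (1/2) *\<^sub>R g'' x (h k) (h k)) - 0) < e"
    proof -
      have "e * (norm (h k))\<^sup>2 > 0" using e p by simp
      then have "norm (g (x + h k) - g x - g' x (h k) - (1/2) *\<^sub>R g'' x (h k) (h k)) < e * (norm (h k))\<^sup>2"
        using a e by linarith
      then show ?thesis using p by (simp add: divide_simps)
    qed
  qed
qed



lemma core2:
  fixes f :: "'a::euclidean_space \<Rightarrow> real" and g :: "'a \<Rightarrow> 'b::euclidean_space"
    and f' :: "'a \<Rightarrow> ('a \<Rightarrow>\<^sub>L real)" and f'' :: "'a \<Rightarrow> ('a \<Rightarrow>\<^sub>L 'a \<Rightarrow>\<^sub>L real)"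
    and g' :: "'a \<Rightarrow> ('a \<Rightarrow>\<^sub>L 'b)" and g'' :: "'a \<Rightarrow> ('a \<Rightarrow>\<^sub>L 'a \<Rightarrow>\<^sub>L 'b)"
    and K :: "'b set" and xb :: 'a
  assumes f1: "\<And>x. (f has_derivative blinfun_apply (f' x)) (at x)"
    and f2: "\<And>x. (f' has_derivative blinfun_apply (f'' x)) (at x)"
    and fc: "isCont f'' xb"
    and g1: "\<And>x. (g has_derivative blinfun_apply (g' x)) (at x)"
    and g2: "\<And>x. (g' has_derivative blinfun_apply (g'' x)) (at x)"
    and gc: "isCont g'' xb"
    and d0: "d \<noteq> 0" and fd: "f' xb d = 0"
    and soc: "soc_multiplier (f' xb) (f'' xb) (g' xb) (g'' xb) K (g xb) d l"
    and hn: "\<And>k. h k \<noteq> 0" and h0: "h \<longlonglongrightarrow> 0" and hK: "\<And>k. g (xb + h k) \<in> K"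
    and ka: "ka \<longlonglongrightarrow> 0" and fh: "\<And>k. f (xb + h k) < f xb + ka k * (norm (h k))\<^sup>2"
    and wdef: "\<And>k. w k = (norm d / norm (h k)) *\<^sub>R h k" and wd: "w \<longlonglongrightarrow> d"
    and tdef: "\<And>k. t k = norm (h k) / norm d"
    and udef: "\<And>k. u k = w k - d"
    and rdef: "\<And>k. r k = t k + norm (u k)"
    and ub: "(\<lambda>k. (1 / r k) *\<^sub>R u k) \<longlonglongrightarrow> ub"
    and tau: "(\<lambda>k. t k / r k) \<longlonglongrightarrow> \<tau>"
  shows False
proof -
  from soc have stat: "\<And>v. f' xb v + l \<bullet> g' xb v = 0"
    and soc1: "\<And>v. v \<in> asymp_second_tangent_cone K (g xb) (g' xb d) \<inter> g' xb ` ({u. u \<bullet> d = 0} - {0}) \<Longrightarrow> l \<bullet> v < 0"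
    and soc2: "ereal (f'' xb d d + l \<bullet> g'' xb d d) - support_fun (second_tangent_set K (g xb) (g' xb d)) l > 0"
    unfolding soc_multiplier_def by blast+
  have nd: "norm d > 0" using d0 by simp
  have tpos: "t k > 0" for k using hn[of k] nd by (simp add: tdef)
  have rpos: "r k > 0" for k using tpos[of k] by (simp add: rdef add_pos_nonneg)
  have t0: "t \<longlonglongrightarrow> 0"
    unfolding tdef[abs_def] using tendsto_divide[OF tendsto_norm[OF h0] tendsto_const[of "norm d"]] nd by simp
  have u0: "u \<longlonglongrightarrow> 0"
    unfolding udef[abs_def] using tendsto_diff[OF wd tendsto_const[of d]] by simp
  have r0: "r \<longlonglongrightarrow> 0"
    unfolding rdef[abs_def] using tendsto_add[OF t0 tendsto_norm[OF u0]] by simp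
  have hw: "h k = t k *\<^sub>R w k" for k
    using hn[of k] nd by (simp add: wdef tdef)
  have nw: "norm (w k) = norm d" for k
    using hn[of k] by (simp add: wdef)
  have ud: "u k \<bullet> d = - (norm (u k))\<^sup>2 / 2" for k
  proof -
    have "(norm (u k))\<^sup>2 = (norm (w k))\<^sup>2 - 2 * (w k \<bullet> d) + (norm d)\<^sup>2"
      by (simp add: udef power2_norm_eq_inner inner_diff_left inner_diff_right inner_commute)
    then show ?thesis using nw[of k] by (simp add: udef inner_diff_left power2_norm_eq_inner)
  qed
  define Rg where "Rg k = g (xb + h k) - g xb - g' xb (h k) - (1/2) *\<^sub>R g'' xb (h k) (h k)" for k
  define Rf where "Rf k = f (xb + h k) - f xb - f' xb (h k) - (1/2) * f'' xb (h k) (h k)" for k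
  have Rg0: "(\<lambda>k. (1 / (t k)\<^sup>2) *\<^sub>R Rg k) \<longlonglongrightarrow> 0"
  proof -
    have L: "(\<lambda>k. (norm d)\<^sup>2 *\<^sub>R ((1 / (norm (h k))\<^sup>2) *\<^sub>R Rg k)) \<longlonglongrightarrow> (norm d)\<^sup>2 *\<^sub>R 0"
      unfolding Rg_def by (intro tendsto_scaleR tendsto_const taylor_seq[OF g1 g2 gc h0 hn])
    have E: "(norm d)\<^sup>2 *\<^sub>R ((1 / (norm (h k))\<^sup>2) *\<^sub>R Rg k) = (1 / (t k)\<^sup>2) *\<^sub>R Rg k" for k
      by (simp add: tdef power_divide)
    show ?thesis using L unfolding E by simp
  qed
  have Rf0: "(\<lambda>k. Rf k / (t k)\<^sup>2) \<longlonglongrightarrow> 0"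
  proof -
    have L: "(\<lambda>k. (norm d)\<^sup>2 *\<^sub>R ((1 / (norm (h k))\<^sup>2) *\<^sub>R Rf k)) \<longlonglongrightarrow> (norm d)\<^sup>2 *\<^sub>R 0"
      unfolding Rf_def using taylor_seq[OF f1 f2 fc h0 hn] by (intro tendsto_scaleR tendsto_const) simp
    have E: "(norm d)\<^sup>2 *\<^sub>R ((1 / (norm (h k))\<^sup>2) *\<^sub>R Rf k) = Rf k / (t k)\<^sup>2" for k
      by (simp add: tdef power_divide)
    show ?thesis using L unfolding E by simp
  qed
  define wh where "wh k = (2 / (t k * r k)) *\<^sub>R (g (xb + h k) - g xb - t k *\<^sub>R g' xb d)" for k
  have Gid: "g (xb + h k) - g xb - t k *\<^sub>R g' xb d = t k *\<^sub>R g' xb (u k) + ((t k)\<^sup>2 / 2) *\<^sub>R g'' xb (w k) (w k) + Rg k" for k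
  proof -
    have "g' xb (h k) = t k *\<^sub>R g' xb d + t k *\<^sub>R g' xb (u k)"
      by (simp add: hw udef blinfun.scaleR_right blinfun.diff_right scaleR_diff_right)
    moreover have "g'' xb (h k) (h k) = (t k)\<^sup>2 *\<^sub>R g'' xb (w k) (w k)"
      by (simp add: hw blinfun.scaleR_right blinfun.scaleR_left power2_eq_square)
    ultimately show ?thesis by (simp add: Rg_def algebra_simps)
  qed
  have whid: "wh k = 2 *\<^sub>R g' xb ((1 / r k) *\<^sub>R u k) + (t k / r k) *\<^sub>R g'' xb (w k) (w k)
         + (2 * (t k / r k)) *\<^sub>R ((1 / (t k)\<^sup>2) *\<^sub>R Rg k)" for k
  proof -
    have c1: "2 / (t k * r k) * t k = 2 * (1 / r k)" and c2: "2 / (t k * r k) * ((t k)\<^sup>2 / 2) = t k / r k"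
      and c3: "2 / (t k * r k) = 2 * (t k / r k) * (1 / (t k)\<^sup>2)"
      using tpos[of k] rpos[of k] by (simp_all add: field_simps power2_eq_square)
    show ?thesis
      unfolding wh_def Gid scaleR_add_right scaleR_scaleR blinfun.scaleR_right c1 c2 unfolding c3[symmetric] by simp
  qed
  define W where "W = 2 *\<^sub>R g' xb ub + \<tau> *\<^sub>R g'' xb d d"
  have whW: "wh \<longlonglongrightarrow> W"
  proof -
    have L: "(\<lambda>k. 2 *\<^sub>R g' xb ((1 / r k) *\<^sub>R u k) + (t k / r k) *\<^sub>R g'' xb (w k) (w k)
         + (2 * (t k / r k)) *\<^sub>R ((1 / (t k)\<^sup>2) *\<^sub>R Rg k)) \<longlonglongrightarrow> 2 *\<^sub>R g' xb ub + \<tau> *\<^sub>R g'' xb d d + (2 * \<tau>) *\<^sub>R 0"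
      by (intro tendsto_intros ub tau wd Rg0)
    have "wh = (\<lambda>k. 2 *\<^sub>R g' xb ((1 / r k) *\<^sub>R u k) + (t k / r k) *\<^sub>R g'' xb (w k) (w k)
         + (2 * (t k / r k)) *\<^sub>R ((1 / (t k)\<^sup>2) *\<^sub>R Rg k))" using whid by (intro ext)
    then show ?thesis using L by (simp add: W_def)
  qed
  define Q where "Q v = f'' xb v v + l \<bullet> g'' xb v v" for v
  define lhs where "lhs k = - (1/2) * (l \<bullet> wh k) + (1/2) * (t k / r k) * Q (w k)
      + (t k / r k) * (Rf k / (t k)\<^sup>2 + l \<bullet> ((1 / (t k)\<^sup>2) *\<^sub>R Rg k))" for k
  have key: "lhs k < ka k * (t k / r k) * (norm d)\<^sup>2" for k
  proof -
    have tk: "t k > 0" and rk: "r k > 0" using tpos rpos by auto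
    have ld: "l \<bullet> g' xb d = 0" using stat[of d] fd by simp
    have C: "g (xb + h k) - g xb - t k *\<^sub>R g' xb d = (t k * r k / 2) *\<^sub>R wh k"
      using tk rk by (simp add: wh_def)
    have lC: "l \<bullet> (g (xb + h k) - g xb) = (t k * r k / 2) * (l \<bullet> wh k)"
      using arg_cong[OF C, of "\<lambda>v. l \<bullet> v"] ld by (simp add: inner_diff_right)
    have E: "l \<bullet> (g (xb + h k) - g xb) = l \<bullet> g' xb (h k) + (1/2) * (l \<bullet> g'' xb (h k) (h k)) + l \<bullet> Rg k"
      by (simp add: Rg_def inner_diff_right inner_add_right)
    have hh1: "g'' xb (h k) (h k) = (t k)\<^sup>2 *\<^sub>R g'' xb (w k) (w k)"
      by (simp add: hw blinfun.scaleR_right blinfun.scaleR_left power2_eq_square)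
    have hh2: "f'' xb (h k) (h k) = (t k)\<^sup>2 * f'' xb (w k) (w k)"
      by (simp add: hw blinfun.scaleR_right blinfun.scaleR_left power2_eq_square)
    have F: "f (xb + h k) - f xb = - (t k * r k / 2) * (l \<bullet> wh k) + ((t k)\<^sup>2 / 2) * Q (w k) + Rf k + l \<bullet> Rg k"
      using stat[of "h k"] lC E hh1 hh2 unfolding Rf_def Q_def by (simp add: algebra_simps)
    have "t k * r k * lhs k = f (xb + h k) - f xb"
      unfolding F lhs_def using tk rk by (simp add: field_simps power2_eq_square)
    also have "\<dots> < ka k * (norm (h k))\<^sup>2" using fh[of k] by simp
    also have "\<dots> = t k * r k * (ka k * (t k / r k) * (norm d)\<^sup>2)"
      using tk rk nd by (simp add: tdef field_simps power2_eq_square)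
    finally show ?thesis using mult_pos_pos[OF tk rk] mult_less_cancel_left_pos by blast
  qed
  have L1: "lhs \<longlonglongrightarrow> - (1/2) * (l \<bullet> W) + (1/2) * \<tau> * Q d"
  proof -
    have "lhs \<longlonglongrightarrow> - (1/2) * (l \<bullet> W) + (1/2) * \<tau> * Q d + \<tau> * (0 + l \<bullet> 0)"
      unfolding lhs_def[abs_def] Q_def[abs_def]
      by (intro tendsto_intros whW tau wd Rf0 Rg0)
    then show ?thesis by simp
  qed
  have L2: "(\<lambda>k. ka k * (t k / r k) * (norm d)\<^sup>2) \<longlonglongrightarrow> 0"
  proof -
    have "(\<lambda>k. ka k * (t k / r k) * (norm d)\<^sup>2) \<longlonglongrightarrow> 0 * \<tau> * (norm d)\<^sup>2"
      by (intro tendsto_intros ka tau)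
    then show ?thesis by simp
  qed
  have lim1: "- (1/2) * (l \<bullet> W) + (1/2) * \<tau> * Q d \<le> 0"
    by (rule LIMSEQ_le[OF L1 L2]) (use key less_imp_le in blast)
  have nub: "norm ub + \<tau> = 1"
  proof -
    have "(\<lambda>k. norm ((1 / r k) *\<^sub>R u k) + t k / r k) \<longlonglongrightarrow> norm ub + \<tau>"
      by (intro tendsto_intros ub tau)
    moreover have "(\<lambda>k. norm ((1 / r k) *\<^sub>R u k) + t k / r k) = (\<lambda>k. 1)"
    proof
      fix k show "norm ((1 / r k) *\<^sub>R u k) + t k / r k = 1"
      proof -
        have rk: "r k > 0" by (rule rpos)
        have "norm ((1 / r k) *\<^sub>R u k) + t k / r k = (norm (u k) + t k) / r k"
          using rk by (simp add: add_divide_distrib)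
        also have "\<dots> = 1" using rk by (simp add: rdef)
        finally show ?thesis .
      qed
    qed
    ultimately have "(\<lambda>k. 1::real) \<longlonglongrightarrow> norm ub + \<tau>" by simp
    from LIMSEQ_unique[OF this tendsto_const] show ?thesis by simp
  qed
  have ubd: "ub \<bullet> d = 0"
  proof -
    have a: "(\<lambda>k. ((1 / r k) *\<^sub>R u k) \<bullet> d) \<longlonglongrightarrow> ub \<bullet> d"
      by (intro tendsto_intros ub)
    have "(\<lambda>k. - (1/2) * norm (u k) * norm ((1 / r k) *\<^sub>R u k)) \<longlonglongrightarrow> - (1/2) * 0 * norm ub"
      using tendsto_norm[OF u0] by (intro tendsto_intros ub) auto
    moreover have "(\<lambda>k. - (1/2) * norm (u k) * norm ((1 / r k) *\<^sub>R u k)) = (\<lambda>k. ((1 / r k) *\<^sub>R u k) \<bullet> d)"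
    proof
      fix k show "- (1/2) * norm (u k) * norm ((1 / r k) *\<^sub>R u k) = ((1 / r k) *\<^sub>R u k) \<bullet> d"
      proof -
        have rk: "r k > 0" by (rule rpos)
        have "((1 / r k) *\<^sub>R u k) \<bullet> d = (u k \<bullet> d) / r k" by simp
        also have "\<dots> = - (1/2) * norm (u k) * (norm (u k) / r k)" unfolding ud[of k]
          by (simp add: power2_eq_square)
        also have "norm (u k) / r k = norm ((1 / r k) *\<^sub>R u k)" using rk by simp
        finally show ?thesis by simp
      qed
    qed
    ultimately have "(\<lambda>k. ((1 / r k) *\<^sub>R u k) \<bullet> d) \<longlonglongrightarrow> 0" by simp
    from LIMSEQ_unique[OF a this] show ?thesis .
  qed
  have tau0: "\<tau> \<ge> 0"
    by (rule LIMSEQ_le_const[OF tau]) (use tpos rpos in \<open>auto intro!: divide_nonneg_pos less_imp_le\<close>)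
  have ghk: "g xb + t k *\<^sub>R g' xb d + ((1/2) * t k * r k) *\<^sub>R wh k = g (xb + h k)" for k
    using tpos[of k] rpos[of k] by (simp add: wh_def)
  show False
  proof (cases "\<tau> = 0")
    case True
    then have ub1: "ub \<noteq> 0" using nub by auto
    have WW: "W = g' xb (2 *\<^sub>R ub)" using True by (simp add: W_def blinfun.scaleR_right)
    have "W \<in> asymp_second_tangent_cone K (g xb) (g' xb d)"
    proof -
      have tr0: "(\<lambda>k. t k / r k) \<longlonglongrightarrow> 0" using tau True by simp
      have "\<forall>k. g xb + t k *\<^sub>R g' xb d + ((1/2) * t k * r k) *\<^sub>R wh k \<in> K"
        using ghk hK by simp
      then show ?thesis unfolding asymp_second_tangent_cone_def
        using tpos rpos t0 r0 tr0 whW by blast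
    qed
    moreover have "W \<in> g' xb ` ({u. u \<bullet> d = 0} - {0})"
      using WW ub1 ubd by auto
    ultimately have "l \<bullet> W < 0" using soc1 by blast
    then show False using lim1 True by simp
  next
    case False
    then have tp: "\<tau> > 0" using tau0 by simp
    define z0 where "z0 = (1 / \<tau>) *\<^sub>R W"
    have zl: "(\<lambda>k. (1 / (t k / r k)) *\<^sub>R wh k) \<longlonglongrightarrow> z0"
      unfolding z0_def using False by (intro tendsto_intros tau whW)
    have zK: "g xb + t k *\<^sub>R g' xb d + ((1/2) * (t k)\<^sup>2) *\<^sub>R ((1 / (t k / r k)) *\<^sub>R wh k) = g (xb + h k)" for k
      using ghk[of k] tpos[of k] rpos[of k] by (simp add: power2_eq_square)
    have "z0 \<in> second_tangent_set K (g xb) (g' xb d)"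
    proof -
      have "\<forall>k. g xb + t k *\<^sub>R g' xb d + ((1/2) * (t k)\<^sup>2) *\<^sub>R ((1 / (t k / r k)) *\<^sub>R wh k) \<in> K"
        using zK hK by simp
      then show ?thesis unfolding second_tangent_set_def
        using tpos t0 zl by blast
    qed
    then have sup: "ereal (l \<bullet> z0) \<le> support_fun (second_tangent_set K (g xb) (g' xb d)) l"
      unfolding support_fun_def by (rule SUP_upper)
    have "Q d \<le> l \<bullet> z0"
    proof -
      have "\<tau> * Q d \<le> l \<bullet> W" using lim1 by simp
      then have "Q d \<le> (l \<bullet> W) / \<tau>" using tp by (simp add: field_simps)
      then show ?thesis by (simp add: z0_def)
    qed
    then have "ereal (Q d) \<le> support_fun (second_tangent_set K (g xb) (g' xb d)) l"
      using sup order_trans ereal_less_eq(3) by blast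
    moreover have "ereal (Q d) - support_fun (second_tangent_set K (g xb) (g' xb d)) l > 0"
      using soc2 by (simp add: Q_def)
    ultimately show False
      by (cases "support_fun (second_tangent_set K (g xb) (g' xb d)) l") auto
  qed
qed
lemma core:
  fixes f :: "'a::euclidean_space \<Rightarrow> real" and g :: "'a \<Rightarrow> 'b::euclidean_space"
    and f' :: "'a \<Rightarrow> ('a \<Rightarrow>\<^sub>L real)" and f'' :: "'a \<Rightarrow> ('a \<Rightarrow>\<^sub>L 'a \<Rightarrow>\<^sub>L real)"
    and g' :: "'a \<Rightarrow> ('a \<Rightarrow>\<^sub>L 'b)" and g'' :: "'a \<Rightarrow> ('a \<Rightarrow>\<^sub>L 'a \<Rightarrow>\<^sub>L 'b)"
    and K :: "'b set" and xb :: 'a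
  assumes f1: "\<And>x. (f has_derivative blinfun_apply (f' x)) (at x)"
    and f2: "\<And>x. (f' has_derivative blinfun_apply (f'' x)) (at x)"
    and fc: "isCont f'' xb"
    and g1: "\<And>x. (g has_derivative blinfun_apply (g' x)) (at x)"
    and g2: "\<And>x. (g' has_derivative blinfun_apply (g'' x)) (at x)"
    and gc: "isCont g'' xb"
    and d0: "d \<noteq> 0" and fd: "f' xb d = 0"
    and soc: "soc_multiplier (f' xb) (f'' xb) (g' xb) (g'' xb) K (g xb) d l"
    and hn: "\<And>k. h k \<noteq> 0" and h0: "h \<longlonglongrightarrow> 0" and hK: "\<And>k. g (xb + h k) \<in> K"
    and ka: "ka \<longlonglongrightarrow> 0" and fh: "\<And>k. f (xb + h k) < f xb + ka k * (norm (h k))\<^sup>2"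
    and wd: "(\<lambda>k. (norm d / norm (h k)) *\<^sub>R h k) \<longlonglongrightarrow> d"
  shows False
proof -
  define w where "w k = (norm d / norm (h k)) *\<^sub>R h k" for k
  define t where "t k = norm (h k) / norm d" for k
  define u where "u k = w k - d" for k
  define r where "r k = t k + norm (u k)" for k
  have rpos: "r k > 0" for k using hn[of k] d0 by (simp add: r_def t_def add_pos_nonneg)
  define p where "p k = ((1 / r k) *\<^sub>R u k, t k / r k)" for k
  have pS: "\<forall>k. p k \<in> cball (0::'a) 1 \<times> {0..1::real}"
  proof
    fix k
    have rk: "r k > 0" by (rule rpos)
    have tk: "t k \<ge> 0" by (simp add: t_def)
    have "norm ((1 / r k) *\<^sub>R u k) = norm (u k) / r k" using rk by simp
    also have "\<dots> \<le> 1" using rk tk by (simp add: r_def)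
    finally have a: "norm ((1 / r k) *\<^sub>R u k) \<le> 1" .
    have b: "t k / r k \<le> 1" using rk tk by (simp add: r_def)
    show "p k \<in> cball (0::'a) 1 \<times> {0..1::real}"
      using a b rk tk by (simp add: p_def)
  qed
  have "seq_compact (cball (0::'a) 1 \<times> {0..1::real})"
    by (intro compact_imp_seq_compact compact_Times compact_cball compact_Icc)
  then obtain lim \<sigma> where sm: "strict_mono (\<sigma> :: nat \<Rightarrow> nat)" and pl: "(p \<circ> \<sigma>) \<longlonglongrightarrow> lim"
    using seq_compactE[OF _ pS] by metis
  obtain ub \<tau> where lim: "lim = (ub, \<tau>)" by (cases lim)
  have ubl: "(\<lambda>k. (1 / (r \<circ> \<sigma>) k) *\<^sub>R (u \<circ> \<sigma>) k) \<longlonglongrightarrow> ub"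
    using tendsto_fst[OF pl] by (simp add: lim p_def o_def)
  have taul: "(\<lambda>k. (t \<circ> \<sigma>) k / (r \<circ> \<sigma>) k) \<longlonglongrightarrow> \<tau>"
    using tendsto_snd[OF pl] by (simp add: lim p_def o_def)
  show False
  proof (rule core2[OF f1 f2 fc g1 g2 gc d0 fd soc, of "h \<circ> \<sigma>" "ka \<circ> \<sigma>" "w \<circ> \<sigma>" "t \<circ> \<sigma>" "u \<circ> \<sigma>" "r \<circ> \<sigma>" ub \<tau>])
    show "\<And>k. (h \<circ> \<sigma>) k \<noteq> 0" using hn by simp
    show "(h \<circ> \<sigma>) \<longlonglongrightarrow> 0" using LIMSEQ_subseq_LIMSEQ[OF h0 sm] .
    show "\<And>k. g (xb + (h \<circ> \<sigma>) k) \<in> K" using hK by simp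
    show "(ka \<circ> \<sigma>) \<longlonglongrightarrow> 0" using LIMSEQ_subseq_LIMSEQ[OF ka sm] .
    show "\<And>k. f (xb + (h \<circ> \<sigma>) k) < f xb + (ka \<circ> \<sigma>) k * (norm ((h \<circ> \<sigma>) k))\<^sup>2" using fh by simp
    show "\<And>k. (w \<circ> \<sigma>) k = (norm d / norm ((h \<circ> \<sigma>) k)) *\<^sub>R (h \<circ> \<sigma>) k" by (simp add: w_def)
    show "(w \<circ> \<sigma>) \<longlonglongrightarrow> d" using LIMSEQ_subseq_LIMSEQ[OF wd sm] by (simp add: w_def[abs_def])
    show "\<And>k. (t \<circ> \<sigma>) k = norm ((h \<circ> \<sigma>) k) / norm d" by (simp add: t_def)
    show "\<And>k. (u \<circ> \<sigma>) k = (w \<circ> \<sigma>) k - d" by (simp add: u_def)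
    show "\<And>k. (r \<circ> \<sigma>) k = (t \<circ> \<sigma>) k + norm ((u \<circ> \<sigma>) k)" by (simp add: r_def)
    show "(\<lambda>k. (1 / (r \<circ> \<sigma>) k) *\<^sub>R (u \<circ> \<sigma>) k) \<longlonglongrightarrow> ub" by (rule ubl)
    show "(\<lambda>k. (t \<circ> \<sigma>) k / (r \<circ> \<sigma>) k) \<longlonglongrightarrow> \<tau>" by (rule taul)
  qed
qed



theorem corollary4p15:
  fixes f :: "'a::euclidean_space \<Rightarrow> real" and g :: "'a \<Rightarrow> 'b::euclidean_space"
    and f' :: "'a \<Rightarrow> ('a \<Rightarrow>\<^sub>L real)" and f'' :: "'a \<Rightarrow> ('a \<Rightarrow>\<^sub>L 'a \<Rightarrow>\<^sub>L real)"
    and g' :: "'a \<Rightarrow> ('a \<Rightarrow>\<^sub>L 'b)" and g'' :: "'a \<Rightarrow> ('a \<Rightarrow>\<^sub>L 'a \<Rightarrow>\<^sub>L 'b)"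
    and K :: "'b set" and xb :: 'a
  assumes f1: "\<And>x. (f has_derivative blinfun_apply (f' x)) (at x)"
    and f2: "\<And>x. (f' has_derivative blinfun_apply (f'' x)) (at x)"
    and f2c: "continuous_on UNIV f''"
    and g1: "\<And>x. (g has_derivative blinfun_apply (g' x)) (at x)"
    and g2: "\<And>x. (g' has_derivative blinfun_apply (g'' x)) (at x)"
    and g2c: "continuous_on UNIV g''"
    and Kc: "closed K"
    and xb: "xb \<in> g -` K"
  shows "(\<forall>d l. d \<in> tangent_cone (g -` K) xb - {0} \<and> blinfun_apply (f' xb) d = 0
              \<and> soc_multiplier (f' xb) (f'' xb) (g' xb) (g'' xb) K (g xb) d l
           \<longrightarrow> (\<exists>\<kappa> \<rho> \<delta>. \<kappa> > 0 \<and> \<rho> > 0 \<and> \<delta> > 0 \<and>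
                 (\<forall>x \<in> g -` K. x - xb \<in> V_set \<rho> \<delta> d \<longrightarrow> f x \<ge> f xb + \<kappa> * (norm (x - xb))\<^sup>2)))
       \<and> ((\<forall>d \<in> tangent_cone (g -` K) xb. blinfun_apply (f' xb) d \<ge> 0)
          \<and> (\<forall>d \<in> {d. blinfun_apply (g' xb) d \<in> tangent_cone K (g xb) \<and> blinfun_apply (f' xb) d \<le> 0} - {0}.
                \<exists>l. soc_multiplier (f' xb) (f'' xb) (g' xb) (g'' xb) K (g xb) d l)
          \<longrightarrow> (\<exists>\<kappa> \<delta>. \<kappa> > 0 \<and> \<delta> > 0 \<and>
                 (\<forall>x \<in> g -` K. norm (x - xb) \<le> \<delta> \<longrightarrow> f x \<ge> f xb + \<kappa> * (norm (x - xb))\<^sup>2)))"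
proof -
  have fc: "isCont f'' xb" using f2c by (simp add: continuous_on_eq_continuous_at)
  have gc: "isCont g'' xb" using g2c by (simp add: continuous_on_eq_continuous_at)
  define e where "e k = inverse (real (Suc k))" for k
  have epos: "e k > 0" for k by (simp add: e_def)
  have e0: "e \<longlonglongrightarrow> 0" unfolding e_def[abs_def] by (rule LIMSEQ_inverse_real_of_nat)
  have P1: "\<exists>\<kappa> \<rho> \<delta>. \<kappa> > 0 \<and> \<rho> > 0 \<and> \<delta> > 0 \<and>
                 (\<forall>x \<in> g -` K. x - xb \<in> V_set \<rho> \<delta> d \<longrightarrow> f x \<ge> f xb + \<kappa> * (norm (x - xb))\<^sup>2)"
    if d0: "d \<noteq> 0" and fd: "f' xb d = 0" and soc: "soc_multiplier (f' xb) (f'' xb) (g' xb) (g'' xb) K (g xb) d l" for d l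
  proof (rule ccontr)
    assume "\<not> ?thesis"
    note nt = this
    have "\<forall>k. \<exists>x. g x \<in> K \<and> x - xb \<in> V_set (e k) (e k) d \<and> f x < f xb + e k * (norm (x - xb))\<^sup>2"
    proof
      fix k
      have "\<not> (\<forall>x \<in> g -` K. x - xb \<in> V_set (e k) (e k) d \<longrightarrow> f x \<ge> f xb + e k * (norm (x - xb))\<^sup>2)"
        using nt epos[of k] by blast
      then show "\<exists>x. g x \<in> K \<and> x - xb \<in> V_set (e k) (e k) d \<and> f x < f xb + e k * (norm (x - xb))\<^sup>2"
        by (auto simp: not_le)
    qed
    then obtain X where X: "\<And>k. g (X k) \<in> K" "\<And>k. X k - xb \<in> V_set (e k) (e k) d"
      "\<And>k. f (X k) < f xb + e k * (norm (X k - xb))\<^sup>2"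
      by (metis (no_types))
    define h where "h k = X k - xb" for k
    have hn: "h k \<noteq> 0" for k using X(3)[of k] by (auto simp: h_def)
    have hb: "norm (h k) \<le> e k" and hv: "norm (norm d *\<^sub>R h k - norm (h k) *\<^sub>R d) \<le> e k * norm (h k) * norm d" for k
      using X(2)[of k] by (auto simp: V_set_def h_def)
    have h0: "h \<longlonglongrightarrow> 0"
      by (rule Lim_null_comparison[OF _ e0]) (use hb in auto)
    have wd0: "(\<lambda>k. (norm d / norm (h k)) *\<^sub>R h k - d) \<longlonglongrightarrow> 0"
    proof (rule Lim_null_comparison)
      show "(\<lambda>k. e k * norm d) \<longlonglongrightarrow> 0" using tendsto_mult[OF e0 tendsto_const[of "norm d"]] by simp
      show "\<forall>\<^sub>F k in sequentially. norm ((norm d / norm (h k)) *\<^sub>R h k - d) \<le> e k * norm d"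
      proof (intro always_eventually allI)
        fix k
        have hk: "norm (h k) > 0" using hn[of k] by simp
        have "(norm d / norm (h k)) *\<^sub>R h k - d = (1 / norm (h k)) *\<^sub>R (norm d *\<^sub>R h k - norm (h k) *\<^sub>R d)"
          using hk by (simp add: scaleR_diff_right)
        then have "norm ((norm d / norm (h k)) *\<^sub>R h k - d) = norm (norm d *\<^sub>R h k - norm (h k) *\<^sub>R d) / norm (h k)"
          using hk by simp
        also have "\<dots> \<le> e k * norm d"
          using hv[of k] hk by (simp add: pos_divide_le_eq mult_ac)
        finally show "norm ((norm d / norm (h k)) *\<^sub>R h k - d) \<le> e k * norm d" .
      qed
    qed
    have wd: "(\<lambda>k. (norm d / norm (h k)) *\<^sub>R h k) \<longlonglongrightarrow> d"
      using tendsto_add[OF wd0 tendsto_const[of d]] by simp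
    have hK: "\<And>k. g (xb + h k) \<in> K" using X(1) by (simp add: h_def)
    have fh: "\<And>k. f (xb + h k) < f xb + e k * (norm (h k))\<^sup>2" using X(3) by (simp add: h_def)
    show False
      by (rule core[OF f1 f2 fc g1 g2 gc d0 fd soc hn h0 hK e0 fh wd])
  qed
  have P2: "\<exists>\<kappa> \<delta>. \<kappa> > 0 \<and> \<delta> > 0 \<and>
                 (\<forall>x \<in> g -` K. norm (x - xb) \<le> \<delta> \<longrightarrow> f x \<ge> f xb + \<kappa> * (norm (x - xb))\<^sup>2)"
    if H1: "\<forall>d \<in> tangent_cone (g -` K) xb. blinfun_apply (f' xb) d \<ge> 0"
      and H2: "\<forall>d \<in> {d. blinfun_apply (g' xb) d \<in> tangent_cone K (g xb) \<and> blinfun_apply (f' xb) d \<le> 0} - {0}.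
                \<exists>l. soc_multiplier (f' xb) (f'' xb) (g' xb) (g'' xb) K (g xb) d l"
  proof (rule ccontr)
    assume "\<not> ?thesis"
    note nt = this
    have "\<forall>k. \<exists>x. g x \<in> K \<and> norm (x - xb) \<le> e k \<and> f x < f xb + e k * (norm (x - xb))\<^sup>2"
    proof
      fix k
      have "\<not> (\<forall>x \<in> g -` K. norm (x - xb) \<le> e k \<longrightarrow> f x \<ge> f xb + e k * (norm (x - xb))\<^sup>2)"
        using nt epos[of k] by blast
      then show "\<exists>x. g x \<in> K \<and> norm (x - xb) \<le> e k \<and> f x < f xb + e k * (norm (x - xb))\<^sup>2"
        by (auto simp: not_le)
    qed
    then obtain X where X: "\<And>k. g (X k) \<in> K" "\<And>k. norm (X k - xb) \<le> e k"
      "\<And>k. f (X k) < f xb + e k * (norm (X k - xb))\<^sup>2"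
      by (metis (no_types))
    define h0 where "h0 k = X k - xb" for k
    have hn0: "h0 k \<noteq> 0" for k using X(3)[of k] by (auto simp: h0_def)
    have h00: "h0 \<longlonglongrightarrow> 0"
      by (rule Lim_null_comparison[OF _ e0]) (use X(2) in \<open>auto simp: h0_def\<close>)
    define v0 where "v0 k = (1 / norm (h0 k)) *\<^sub>R h0 k" for k
    have vS: "\<forall>k. v0 k \<in> sphere (0::'a) 1" using hn0 by (simp add: v0_def)
    obtain dh \<sigma> where dh: "dh \<in> sphere (0::'a) 1" and sm: "strict_mono (\<sigma> :: nat \<Rightarrow> nat)"
      and vl: "(v0 \<circ> \<sigma>) \<longlonglongrightarrow> dh"
      using seq_compactE[OF compact_imp_seq_compact[OF compact_sphere] vS] by metis
    define h where "h = h0 \<circ> \<sigma>"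
    define es where "es = e \<circ> \<sigma>"
    define v where "v = v0 \<circ> \<sigma>"
    define n where "n k = norm (h k)" for k
    have nd: "norm dh = 1" using dh by simp
    have dh0: "dh \<noteq> 0" using nd by auto
    have hn: "h k \<noteq> 0" for k using hn0 by (simp add: h_def)
    have npos: "n k > 0" for k using hn[of k] by (simp add: n_def)
    have h0': "h \<longlonglongrightarrow> 0" unfolding h_def using LIMSEQ_subseq_LIMSEQ[OF h00 sm] .
    have n0: "n \<longlonglongrightarrow> 0" unfolding n_def[abs_def] using tendsto_norm[OF h0'] by simp
    have es0: "es \<longlonglongrightarrow> 0" unfolding es_def using LIMSEQ_subseq_LIMSEQ[OF e0 sm] .
    have vd: "v \<longlonglongrightarrow> dh" using vl by (simp add: v_def)
    have hK: "g (xb + h k) \<in> K" for k using X(1) by (simp add: h_def h0_def)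
    have fh: "f (xb + h k) < f xb + es k * (norm (h k))\<^sup>2" for k using X(3) by (simp add: h_def h0_def es_def)
    have hv: "h k = n k *\<^sub>R v k" for k using hn[of k] by (simp add: n_def v_def v0_def h_def)
    have vh: "v k = (1 / n k) *\<^sub>R h k" for k by (simp add: v_def v0_def n_def h_def)
    have Tc: "dh \<in> tangent_cone (g -` K) xb"
    proof -
      have "\<forall>k. xb + n k *\<^sub>R v k \<in> g -` K" using hK hv by simp
      then show ?thesis unfolding tangent_cone_def using npos n0 vd by blast
    qed
    define Rf where "Rf k = f (xb + h k) - f xb - f' xb (h k) - (1/2) * f'' xb (h k) (h k)" for k
    define Rg where "Rg k = g (xb + h k) - g xb - g' xb (h k) - (1/2) *\<^sub>R g'' xb (h k) (h k)" for k
    have Rf0: "(\<lambda>k. (1 / (n k)\<^sup>2) * Rf k) \<longlonglongrightarrow> 0"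
      using taylor_seq[OF f1 f2 fc h0' hn] by (simp add: Rf_def n_def)
    have Rg0: "(\<lambda>k. (1 / (n k)\<^sup>2) *\<^sub>R Rg k) \<longlonglongrightarrow> 0"
      using taylor_seq[OF g1 g2 gc h0' hn] by (simp add: Rg_def n_def)
    define rhs where "rhs k = es k * n k - (1/2) * n k * f'' xb (v k) (v k) - n k * ((1 / (n k)\<^sup>2) * Rf k)" for k
    have fv: "f' xb (v k) < rhs k" for k
    proof -
      have nk: "n k > 0" by (rule npos)
      have a: "f' xb (h k) = n k * f' xb (v k)" by (simp add: hv blinfun.scaleR_right)
      have b: "f'' xb (h k) (h k) = (n k)\<^sup>2 * f'' xb (v k) (v k)"
        by (simp add: hv blinfun.scaleR_right blinfun.scaleR_left power2_eq_square)
      have "n k * f' xb (v k) = f (xb + h k) - f xb - (1/2) * f'' xb (h k) (h k) - Rf k"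
        using a by (simp add: Rf_def)
      also have "\<dots> < es k * (n k)\<^sup>2 - (1/2) * f'' xb (h k) (h k) - Rf k"
        using fh[of k] by (simp add: n_def)
      also have "\<dots> = n k * rhs k"
        unfolding rhs_def b using nk by (simp add: field_simps power2_eq_square)
      finally show ?thesis using nk by simp
    qed
    have rhs0: "rhs \<longlonglongrightarrow> 0"
    proof -
      have "rhs \<longlonglongrightarrow> 0 * 0 - (1/2) * 0 * f'' xb dh dh - 0 * 0"
        unfolding rhs_def[abs_def] by (intro tendsto_intros es0 n0 vd Rf0)
      then show ?thesis by simp
    qed
    have fvl: "(\<lambda>k. f' xb (v k)) \<longlonglongrightarrow> f' xb dh" by (intro tendsto_intros vd)
    have fdle: "f' xb dh \<le> 0"
      by (rule LIMSEQ_le[OF fvl rhs0]) (use fv less_imp_le in blast)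
    have fd: "f' xb dh = 0" using H1 Tc fdle by force
    have gT: "g' xb dh \<in> tangent_cone K (g xb)"
    proof -
      define dd where "dd k = (1 / n k) *\<^sub>R (g (xb + h k) - g xb)" for k
      have ddid: "dd k = g' xb (v k) + ((1/2) * n k) *\<^sub>R g'' xb (v k) (v k) + n k *\<^sub>R ((1 / (n k)\<^sup>2) *\<^sub>R Rg k)" for k
      proof -
        have nk: "n k > 0" by (rule npos)
        have "g (xb + h k) - g xb = n k *\<^sub>R g' xb (v k) + ((n k)\<^sup>2 / 2) *\<^sub>R g'' xb (v k) (v k) + Rg k"
          by (simp add: Rg_def hv[of k] blinfun.scaleR_right blinfun.scaleR_left power2_eq_square)
        then show ?thesis using nk
          by (simp add: dd_def scaleR_add_right power2_eq_square)
      qed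
      have "(\<lambda>k. g' xb (v k) + ((1/2) * n k) *\<^sub>R g'' xb (v k) (v k) + n k *\<^sub>R ((1 / (n k)\<^sup>2) *\<^sub>R Rg k))
              \<longlonglongrightarrow> g' xb dh + ((1/2) * 0) *\<^sub>R g'' xb dh dh + 0 *\<^sub>R 0"
        by (intro tendsto_intros vd n0 Rg0)
      then have ddl: "dd \<longlonglongrightarrow> g' xb dh" unfolding ddid[abs_def] by simp
      have "\<forall>k. g xb + n k *\<^sub>R dd k \<in> K"
      proof
        fix k have "n k \<noteq> 0" using npos[of k] by simp
        then show "g xb + n k *\<^sub>R dd k \<in> K" using hK[of k] by (simp add: dd_def)
      qed
      then show ?thesis unfolding tangent_cone_def using npos n0 ddl by blast
    qed
    obtain l where soc: "soc_multiplier (f' xb) (f'' xb) (g' xb) (g'' xb) K (g xb) dh l"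
      using H2 gT fd dh0 by force
    have wd: "(\<lambda>k. (norm dh / norm (h k)) *\<^sub>R h k) \<longlonglongrightarrow> dh"
    proof -
      have "v = (\<lambda>k. (norm dh / norm (h k)) *\<^sub>R h k)"
        by (rule ext) (simp add: vh n_def nd)
      then show ?thesis using vd by simp
    qed
    show False
      by (rule core[OF f1 f2 fc g1 g2 gc dh0 fd soc hn h0' hK es0 fh wd])
  qed
  show ?thesis
  proof (intro conjI allI impI)
    fix d l
    assume a: "d \<in> tangent_cone (g -` K) xb - {0} \<and> blinfun_apply (f' xb) d = 0
              \<and> soc_multiplier (f' xb) (f'' xb) (g' xb) (g'' xb) K (g xb) d l"
    then show "\<exists>\<kappa> \<rho> \<delta>. \<kappa> > 0 \<and> \<rho> > 0 \<and> \<delta> > 0 \<and>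
                 (\<forall>x \<in> g -` K. x - xb \<in> V_set \<rho> \<delta> d \<longrightarrow> f x \<ge> f xb + \<kappa> * (norm (x - xb))\<^sup>2)"
      using P1[of d l] by blast
  next
    assume "(\<forall>d \<in> tangent_cone (g -` K) xb. blinfun_apply (f' xb) d \<ge> 0)
          \<and> (\<forall>d \<in> {d. blinfun_apply (g' xb) d \<in> tangent_cone K (g xb) \<and> blinfun_apply (f' xb) d \<le> 0} - {0}.
                \<exists>l. soc_multiplier (f' xb) (f'' xb) (g' xb) (g'' xb) K (g xb) d l)"
    then show "\<exists>\<kappa> \<delta>. \<kappa> > 0 \<and> \<delta> > 0 \<and>
                 (\<forall>x \<in> g -` K. norm (x - xb) \<le> \<delta> \<longrightarrow> f x \<ge> f xb + \<kappa> * (norm (x - xb))\<^sup>2)"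
      using P2 by blast
  qed
qed

end
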